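(* Let $N\ge 1$ and $\tilde m=(0,m_1,\dots,m_{N-1})^T\in\mathbb{R}^{N}$. Let $\tilde a,\tilde b\in\mathbb{R}^N$ be vectors whose first entries both equal $1$ and which satisfy $$\mathcal{T}(\tilde m)\tilde a=\Lambda\tilde a,\qquad \mathcal{T}(\tilde m)\tilde b=-\Lambda\tilde b.$$ Then $\mathcal{T}(\tilde a)\,\mathcal{T}(\tilde b)=I$, the $N\times N$ identity matrix.
   Context: For $\mathbf{x}=(x_1,\dots,x_N)^T\in\mathbb{R}^N$, $\mathcal{T}(\mathbf{x})$ denotes the $N\times N$ lower triangular Toeplitz matrix whose first column is $\mathbf{x}$, i.e. $\mathcal{T}(\mathbf{x})_{ij}=x_{i-j+1}$ for $i\ge j$ and $0$ for $i<j$. $\Lambda=\mathrm{diag}(0,1,2,\dots,N-1)$. *)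

theory Defs
  imports "Jordan_Normal_Form.Matrix"
begin

definition toeplitz_lower :: "real vec \<Rightarrow> real mat" where
  "toeplitz_lower x = mat (dim_vec x) (dim_vec x)
     (\<lambda>(i,j). if j \<le> i then x $ (i - j) else 0)"

definition Lambda_mat :: "nat \<Rightarrow> real mat" where
  "Lambda_mat N = mat N N (\<lambda>(i,j). if i = j then real i else 0)"

end

theory Submission imports Defs begin

lemma S1_eq:
  fixes F :: "nat \<Rightarrow> nat \<Rightarrow> nat \<Rightarrow> real"
  shows "(\<Sum>j\<le>n. \<Sum>k\<le>j. F k (j-k) (n-j)) = (\<Sum>(k,p,q)\<in>{(k,p,q). k+p+q = n}. F k p q)"
proof -
  have "(\<Sum>j\<le>n. \<Sum>k\<le>j. F k (j-k) (n-j)) = (\<Sum>(j,k)\<in>Sigma {..n} (\<lambda>j. {..j}). F k (j-k) (n-j))"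
    by (rule sum.Sigma) auto
  also have "\<dots> = (\<Sum>(k,p,q)\<in>{(k,p,q). k+p+q = n}. F k p q)"
    by (rule sum.reindex_bij_witness[where i="\<lambda>(k,p,q). (k+p, k)" and j="\<lambda>(j,k). (k, j-k, n-j)"]) auto
  finally show ?thesis .
qed

lemma S2_eq:
  fixes F :: "nat \<Rightarrow> nat \<Rightarrow> nat \<Rightarrow> real"
  shows "(\<Sum>j\<le>n. \<Sum>k\<le>n-j. F k j (n-j-k)) = (\<Sum>(k,p,q)\<in>{(k,p,q). k+p+q = n}. F k p q)"
proof -
  have "(\<Sum>j\<le>n. \<Sum>k\<le>n-j. F k j (n-j-k)) = (\<Sum>(j,k)\<in>Sigma {..n} (\<lambda>j. {..n-j}). F k j (n-j-k))"
    by (rule sum.Sigma) auto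
  also have "\<dots> = (\<Sum>(k,p,q)\<in>{(k,p,q). k+p+q = n}. F k p q)"
    by (rule sum.reindex_bij_witness[where i="\<lambda>(k,p,q). (p, k)" and j="\<lambda>(j,k). (k, j, n-j-k)"]) auto
  finally show ?thesis .
qed

lemma conv_zero:
  fixes f g h :: "nat \<Rightarrow> real"
  assumes hf: "\<And>i. i < N \<Longrightarrow> real i * f i = (\<Sum>k\<le>i. h k * f (i-k))"
    and hg: "\<And>i. i < N \<Longrightarrow> real i * g i = - (\<Sum>k\<le>i. h k * g (i-k))"
    and n: "n < N"
  shows "real n * (\<Sum>j\<le>n. f j * g (n-j)) = 0"
proof -
  have "real n * (\<Sum>j\<le>n. f j * g (n-j)) = (\<Sum>j\<le>n. (real j * f j) * g (n-j)) + (\<Sum>j\<le>n. f j * (real (n-j) * g (n-j)))"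
    by (simp add: sum_distrib_left sum.distrib[symmetric] algebra_simps of_nat_diff)
  also have "(\<Sum>j\<le>n. (real j * f j) * g (n-j)) = (\<Sum>j\<le>n. \<Sum>k\<le>j. h k * f (j-k) * g (n-j))"
    using n by (intro sum.cong refl) (simp add: hf sum_distrib_right)
  also have "(\<Sum>j\<le>n. f j * (real (n-j) * g (n-j))) = - (\<Sum>j\<le>n. \<Sum>k\<le>n-j. h k * f j * g (n-j-k))"
  proof -
    have "\<And>j. j \<le> n \<Longrightarrow> f j * (real (n-j) * g (n-j)) = - (\<Sum>k\<le>n-j. h k * f j * g (n-j-k))"
    proof -
      fix j assume "j \<le> n"
      then have "n - j < N" using n by simp
      then have "real (n-j) * g (n-j) = - (\<Sum>k\<le>n-j. h k * g (n-j-k))" by (rule hg)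
      then show "f j * (real (n-j) * g (n-j)) = - (\<Sum>k\<le>n-j. h k * f j * g (n-j-k))"
        by (simp add: sum_distrib_left algebra_simps sum_negf)
    qed
    then show ?thesis by (simp add: sum_negf[symmetric])
  qed
  also have "(\<Sum>j\<le>n. \<Sum>k\<le>j. h k * f (j-k) * g (n-j)) = (\<Sum>j\<le>n. \<Sum>k\<le>n-j. h k * f j * g (n-j-k))"
    using S1_eq[of "\<lambda>k p q. h k * f p * g q" n] S2_eq[of "\<lambda>k p q. h k * f p * g q" n] by simp
  finally show ?thesis by simp
qed

lemma restrict_sum:
  fixes F :: "nat \<Rightarrow> real"
  assumes "i < N"
  shows "(\<Sum>j<N. (if j \<le> i then F j else 0)) = (\<Sum>k\<le>i. F (i-k))"
proof -
  have "(\<Sum>j<N. (if j \<le> i then F j else 0)) = (\<Sum>j\<in>{..<N} \<inter> {..i}. F j)"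
    by (simp add: sum.inter_restrict)
  also have "{..<N} \<inter> {..i} = {..i}" using assms by auto
  also have "(\<Sum>j\<le>i. F j) = (\<Sum>k\<le>i. F (i-k))"
    by (rule sum.reindex_bij_witness[where i="\<lambda>k. i-k" and j="\<lambda>k. i-k"]) auto
  finally show ?thesis .
qed

lemma prod_sum:
  fixes A B :: "nat \<Rightarrow> real"
  assumes "i < N"
  shows "(\<Sum>k<N. (if k \<le> i then A (i-k) else 0) * (if j \<le> k then B (k-j) else 0))
     = (if j \<le> i then (\<Sum>p\<le>i-j. A p * B (i-j-p)) else 0)"
proof -
  have "(\<Sum>k<N. (if k \<le> i then A (i-k) else 0) * (if j \<le> k then B (k-j) else 0))
     = (\<Sum>k\<in>{..<N} \<inter> {j..i}. A (i-k) * B (k-j))"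
    by (simp add: sum.inter_restrict) (intro sum.cong refl, auto)
  also have "{..<N} \<inter> {j..i} = {j..i}" using assms by auto
  also have "(\<Sum>k\<in>{j..i}. A (i-k) * B (k-j)) = (if j \<le> i then (\<Sum>p\<le>i-j. A p * B (i-j-p)) else 0)"
  proof (cases "j \<le> i")
    case True
    have "(\<Sum>k\<in>{j..i}. A (i-k) * B (k-j)) = (\<Sum>p\<le>i-j. A p * B (i-j-p))"
      by (rule sum.reindex_bij_witness[where i="\<lambda>p. i-p" and j="\<lambda>k. i-k"]) (use True in auto)
    then show ?thesis using True by simp
  qed simp
  finally show ?thesis .
qed

theorem lemma1:
  fixes N :: nat and m a b :: "real vec"
  assumes "N \<ge> 1"
    and "dim_vec m = N" and "dim_vec a = N" and "dim_vec b = N"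
    and "m $ 0 = 0"
    and "a $ 0 = 1" and "b $ 0 = 1"
    and "toeplitz_lower m *\<^sub>v a = Lambda_mat N *\<^sub>v a"
    and "toeplitz_lower m *\<^sub>v b = - (Lambda_mat N *\<^sub>v b)"
  shows "toeplitz_lower a * toeplitz_lower b = 1\<^sub>m N"
proof -
  have hf: "real i * a$i = (\<Sum>k\<le>i. m$k * a$(i-k))" if i: "i < N" for i
  proof -
    have "(toeplitz_lower m *\<^sub>v a) $ i = (Lambda_mat N *\<^sub>v a) $ i" using assms(8) by simp
    moreover have "(Lambda_mat N *\<^sub>v a) $ i = real i * a$i"
    proof -
      have "(Lambda_mat N *\<^sub>v a) $ i = (\<Sum>j\<in>{0..<N}. (if i = j then real i * a$j else 0))"
        using i assms(3) unfolding Lambda_mat_def by (simp add: mult_mat_vec_def scalar_prod_def row_def if_distrib[of "\<lambda>x. x * _"] cong: if_cong)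
      also have "\<dots> = real i * a$i" using i by (simp add: sum.delta)
      finally show ?thesis .
    qed
    moreover have "(toeplitz_lower m *\<^sub>v a) $ i = (\<Sum>j<N. (if j \<le> i then m$(i-j) * a$j else 0))"
      using i assms(2,3) by (auto simp: toeplitz_lower_def scalar_prod_def lessThan_atLeast0 intro!: sum.cong)
    ultimately show ?thesis by (simp add: restrict_sum[OF i] mult.commute)
  qed
  have hg: "real i * b$i = - (\<Sum>k\<le>i. m$k * b$(i-k))" if i: "i < N" for i
  proof -
    have "(toeplitz_lower m *\<^sub>v b) $ i = - ((Lambda_mat N *\<^sub>v b) $ i)" using assms(9) i assms(4) by (simp add: Lambda_mat_def)
    moreover have "(Lambda_mat N *\<^sub>v b) $ i = real i * b$i"
      using i assms(4) unfolding Lambda_mat_def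
      by (simp add: mult_mat_vec_def scalar_prod_def row_def if_distrib[of "\<lambda>x. x * _"] cong: if_cong)
    moreover have "(toeplitz_lower m *\<^sub>v b) $ i = (\<Sum>j<N. (if j \<le> i then m$(i-j) * b$j else 0))"
      using i assms(2,4) by (auto simp: toeplitz_lower_def scalar_prod_def lessThan_atLeast0 intro!: sum.cong)
    ultimately show ?thesis by (simp add: restrict_sum[OF i] mult.commute)
  qed
  have c: "(\<Sum>p\<le>d. a$p * b$(d-p)) = (if d = 0 then 1 else 0)" if d: "d < N" for d
  proof (cases "d = 0")
    case True then show ?thesis using assms(6,7) by simp
  next
    case False
    have "real d * (\<Sum>p\<le>d. a$p * b$(d-p)) = 0"
      by (rule conv_zero[where h="\<lambda>k. m$k" and N=N]) (use hf hg d in auto)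
    then show ?thesis using False by simp
  qed
  show ?thesis
  proof (rule eq_matI)
    fix i j assume i: "i < dim_row (1\<^sub>m N)" and j: "j < dim_col (1\<^sub>m N)"
    then have i: "i < N" and j: "j < N" by auto
    have "(toeplitz_lower a * toeplitz_lower b) $$ (i,j)
        = (\<Sum>k<N. (if k \<le> i then a$(i-k) else 0) * (if j \<le> k then b$(k-j) else 0))"
      using i j assms(3,4) by (auto simp: toeplitz_lower_def scalar_prod_def lessThan_atLeast0 intro!: sum.cong)
    also have "\<dots> = (if j \<le> i then (\<Sum>p\<le>i-j. a$p * b$(i-j-p)) else 0)"
      by (rule prod_sum[OF i])
    also have "\<dots> = 1\<^sub>m N $$ (i,j)" using i j c[of "i-j"] by auto
    finally show "(toeplitz_lower a * toeplitz_lower b) $$ (i,j) = 1\<^sub>m N $$ (i,j)" .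
  qed (use assms(3,4) in \<open>auto simp: toeplitz_lower_def\<close>)
qed

end
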